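(* Let $p$ be a prime and let $G$ be a finite $p$-group such that $Z(G)$ is not contained in $G'$ and $G$ has nilpotency class at least $3$. If $G$ has coclass $2$, then $G$ does not satisfy $Z(\mathrm{Inn}(G))=\mathrm{Aut}_c^{Z}(G)<\mathrm{Aut}_c(G)$ (i.e., it is not the case that $\mathrm{Aut}_c^{Z}(G)$ equals $Z(\mathrm{Inn}(G))$ and is a proper subgroup of $\mathrm{Aut}_c(G)$).
   Context: $G'$ is the commutator subgroup and $Z(G)$ the center of $G$. $\mathrm{Inn}(G)$ is the group of inner automorphisms of $G$. An automorphism $\alpha$ of $G$ is central if $x^{-1}\alpha(x)\in Z(G)$ for all $x\in G$ (equivalently, it commutes with all inner automorphisms); $\mathrm{Aut}_c(G)$ denotes the group of all central automorphisms of $G$, and $\mathrm{Aut}_c^{Z}(G)$ the subgroup of central automorphisms fixing every element of $Z(G)$. A group of order $p^n$ and nilpotency class $c$ has coclass $n-c$. *)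

theory Defs
  imports "HOL-Algebra.Algebra"
begin

definition center :: "('a, 'b) monoid_scheme \<Rightarrow> 'a set" where
  "center G = {z \<in> carrier G. \<forall>x \<in> carrier G. z \<otimes>\<^bsub>G\<^esub> x = x \<otimes>\<^bsub>G\<^esub> z}"

definition commutator_subgroup :: "('a, 'b) monoid_scheme \<Rightarrow> 'a set" where
  "commutator_subgroup G = derived G (carrier G)"

text \<open>Lower central series: gamma_1 = G (index 0 here), gamma_{i+1} = [G, gamma_i].\<close>
primrec lower_central :: "('a, 'b) monoid_scheme \<Rightarrow> nat \<Rightarrow> 'a set" where
  "lower_central G 0 = carrier G"
| "lower_central G (Suc n) = generate G
     {x \<otimes>\<^bsub>G\<^esub> y \<otimes>\<^bsub>G\<^esub> inv\<^bsub>G\<^esub> x \<otimes>\<^bsub>G\<^esub> inv\<^bsub>G\<^esub> y | x y. x \<in> carrier G \<and> y \<in> lower_central G n}"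

definition nilpotency_class :: "('a, 'b) monoid_scheme \<Rightarrow> nat" where
  "nilpotency_class G = (LEAST c. lower_central G c = {\<one>\<^bsub>G\<^esub>})"

definition inner_aut :: "('a, 'b) monoid_scheme \<Rightarrow> 'a \<Rightarrow> ('a \<Rightarrow> 'a)" where
  "inner_aut G g = (\<lambda>x \<in> carrier G. g \<otimes>\<^bsub>G\<^esub> x \<otimes>\<^bsub>G\<^esub> inv\<^bsub>G\<^esub> g)"

definition Inn :: "('a, 'b) monoid_scheme \<Rightarrow> ('a \<Rightarrow> 'a) set" where
  "Inn G = inner_aut G ` carrier G"

definition InnGroup :: "('a, 'b) monoid_scheme \<Rightarrow> ('a \<Rightarrow> 'a) monoid" where
  "InnGroup G = (AutoGroup G)\<lparr>carrier := Inn G\<rparr>"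

definition central_aut :: "('a, 'b) monoid_scheme \<Rightarrow> ('a \<Rightarrow> 'a) set" where
  "central_aut G = {\<alpha> \<in> auto G. \<forall>x \<in> carrier G. inv\<^bsub>G\<^esub> x \<otimes>\<^bsub>G\<^esub> \<alpha> x \<in> center G}"

definition central_aut_Z :: "('a, 'b) monoid_scheme \<Rightarrow> ('a \<Rightarrow> 'a) set" where
  "central_aut_Z G = {\<alpha> \<in> central_aut G. \<forall>z \<in> center G. \<alpha> z = z}"

end

theory Submission
  imports Defs
begin
context group begin
lemma cancel1 [simp]: "\<lbrakk>x \<in> carrier G; z \<in> carrier G\<rbrakk> \<Longrightarrow> x \<otimes> (inv x \<otimes> z) = z"
  by (simp add: m_assoc[symmetric])
lemma cancel2 [simp]: "\<lbrakk>x \<in> carrier G; z \<in> carrier G\<rbrakk> \<Longrightarrow> inv x \<otimes> (x \<otimes> z) = z"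
  by (simp add: m_assoc[symmetric])
lemmas gs = m_assoc inv_mult_group
end

primrec uc :: "('a, 'b) monoid_scheme \<Rightarrow> nat \<Rightarrow> 'a set" where
  "uc G 0 = {\<one>\<^bsub>G\<^esub>}"
| "uc G (Suc j) = {y \<in> carrier G. \<forall>x \<in> carrier G. x \<otimes>\<^bsub>G\<^esub> y \<otimes>\<^bsub>G\<^esub> inv\<^bsub>G\<^esub> x \<otimes>\<^bsub>G\<^esub> inv\<^bsub>G\<^esub> y \<in> uc G j}"

context group begin

lemma uc_normal: "uc G j \<lhd> G"
proof (induction j)
  case 0 then show ?case using one_is_normal by simp
next
  case (Suc j)
  interpret N: normal "uc G j" G by fact
  let ?U = "uc G (Suc j)"
  have sub: "?U \<subseteq> carrier G" by auto
  have mult: "a \<otimes> b \<in> ?U" if a: "a \<in> ?U" and b: "b \<in> ?U" for a b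
  proof -
    have ac: "a \<in> carrier G" and bc: "b \<in> carrier G" using a b by auto
    have "x \<otimes> (a \<otimes> b) \<otimes> inv x \<otimes> inv (a \<otimes> b) \<in> uc G j" if x: "x \<in> carrier G" for x
    proof -
      have e: "x \<otimes> (a \<otimes> b) \<otimes> inv x \<otimes> inv (a \<otimes> b) = (x \<otimes> a \<otimes> inv x \<otimes> inv a) \<otimes> (a \<otimes> (x \<otimes> b \<otimes> inv x \<otimes> inv b) \<otimes> inv a)"
        using ac bc x by (simp add: gs)
      have "x \<otimes> a \<otimes> inv x \<otimes> inv a \<in> uc G j" using a x by auto
      moreover have "a \<otimes> (x \<otimes> b \<otimes> inv x \<otimes> inv b) \<otimes> inv a \<in> uc G j"
        using b x ac by (intro N.inv_op_closed2) auto
      ultimately show ?thesis unfolding e by (rule N.m_closed)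
    qed
    then show ?thesis using ac bc by auto
  qed
  have inv: "inv a \<in> ?U" if a: "a \<in> ?U" for a
  proof -
    have ac: "a \<in> carrier G" using a by auto
    have "x \<otimes> inv a \<otimes> inv x \<otimes> inv (inv a) \<in> uc G j" if x: "x \<in> carrier G" for x
    proof -
      have e: "x \<otimes> inv a \<otimes> inv x \<otimes> inv (inv a) = inv a \<otimes> inv (x \<otimes> a \<otimes> inv x \<otimes> inv a) \<otimes> inv (inv a)"
        using ac x by (simp add: gs)
      have "x \<otimes> a \<otimes> inv x \<otimes> inv a \<in> uc G j" using a x by auto
      then show ?thesis unfolding e using ac by (intro N.inv_op_closed2) auto
    qed
    then show ?thesis using ac by auto
  qed
  have one: "\<one> \<in> ?U" by simp
  have sg: "subgroup ?U G" by (rule subgroupI[OF sub _ inv mult]) (use one in auto)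
  have conj: "g \<otimes> h \<otimes> inv g \<in> ?U" if g: "g \<in> carrier G" and h: "h \<in> ?U" for g h
  proof -
    have hc: "h \<in> carrier G" using h by auto
    have "x \<otimes> (g \<otimes> h \<otimes> inv g) \<otimes> inv x \<otimes> inv (g \<otimes> h \<otimes> inv g) \<in> uc G j" if x: "x \<in> carrier G" for x
    proof -
      have e: "x \<otimes> (g \<otimes> h \<otimes> inv g) \<otimes> inv x \<otimes> inv (g \<otimes> h \<otimes> inv g) = g \<otimes> ((inv g \<otimes> x \<otimes> g) \<otimes> h \<otimes> inv (inv g \<otimes> x \<otimes> g) \<otimes> inv h) \<otimes> inv g"
        using g hc x by (simp add: gs)
      have "(inv g \<otimes> x \<otimes> g) \<otimes> h \<otimes> inv (inv g \<otimes> x \<otimes> g) \<otimes> inv h \<in> uc G j" using h x g by auto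
      then show ?thesis unfolding e using g by (intro N.inv_op_closed2) auto
    qed
    then show ?thesis using g hc by auto
  qed
  show ?case unfolding normal_inv_iff using sg conj by blast
qed

lemma uc_subgroup: "subgroup (uc G j) G"
  using uc_normal normal_imp_subgroup by blast

lemma uc_carrier: "uc G j \<subseteq> carrier G"
  using uc_subgroup subgroup.subset by blast

lemma uc_mono_Suc: "uc G j \<subseteq> uc G (Suc j)"
proof
  fix y assume y: "y \<in> uc G j"
  interpret N: normal "uc G j" G by (rule uc_normal)
  have yc: "y \<in> carrier G" using y uc_carrier by auto
  have "x \<otimes> y \<otimes> inv x \<otimes> inv y \<in> uc G j" if x: "x \<in> carrier G" for x
    using N.m_closed[OF N.inv_op_closed2[OF x y] N.m_inv_closed[OF y]] by simp
  then show "y \<in> uc G (Suc j)" using yc by auto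
qed

lemma uc_mono: "i \<le> j \<Longrightarrow> uc G i \<subseteq> uc G j"
proof (induction j)
  case 0 then show ?case by simp
next
  case (Suc j)
  show ?case
  proof (cases "i = Suc j")
    case False
    then have "i \<le> j" using Suc.prems by simp
    then show ?thesis using Suc.IH uc_mono_Suc[of j] by blast
  qed simp
qed

lemma uc_one: "uc G 1 = center G"
proof -
  have "z \<otimes> x = x \<otimes> z \<longleftrightarrow> x \<otimes> z \<otimes> inv x \<otimes> inv z = \<one>" if z: "z \<in> carrier G" and x: "x \<in> carrier G" for x z
  proof
    assume e: "z \<otimes> x = x \<otimes> z"
    have "x \<otimes> z \<otimes> inv x \<otimes> inv z = z \<otimes> x \<otimes> inv x \<otimes> inv z" using e by simp
    then show "x \<otimes> z \<otimes> inv x \<otimes> inv z = \<one>" using z x by (simp add: gs)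
  next
    assume h: "x \<otimes> z \<otimes> inv x \<otimes> inv z = \<one>"
    have "x \<otimes> z = x \<otimes> z \<otimes> inv x \<otimes> inv z \<otimes> (z \<otimes> x)" using z x by (simp add: gs)
    also have "\<dots> = z \<otimes> x" using h z x by simp
    finally show "z \<otimes> x = x \<otimes> z" by simp
  qed
  then show ?thesis unfolding center_def by (auto simp: One_nat_def)
qed

end

context group begin

lemma lc_carrier: "lower_central G i \<subseteq> carrier G"
proof (induction i)
  case (Suc i)
  show ?case unfolding lower_central.simps
    by (rule generate_incl) (use Suc in auto)
qed simp

lemma lc_subgroup: "subgroup (lower_central G i) G"
proof (cases i)
  case 0 then show ?thesis by (simp add: subgroup_self)
next
  case (Suc k) then show ?thesis unfolding Suc lower_central.simps
    by (intro generate_is_subgroup) (use lc_carrier[of k] in auto)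
qed

lemma lc_uc: assumes "uc G k = carrier G" shows "i \<le> k \<Longrightarrow> lower_central G i \<subseteq> uc G (k - i)"
proof (induction i)
  case 0 then show ?case using assms by simp
next
  case (Suc i)
  have IH: "lower_central G i \<subseteq> uc G (Suc (k - Suc i))" using Suc by (simp add: Suc_diff_Suc)
  show ?case unfolding lower_central.simps
    by (rule generate_subgroup_incl[OF _ uc_subgroup]) (use IH in auto)
qed

lemma uc_lc: assumes "lower_central G c = {\<one>}" shows "i \<le> c \<Longrightarrow> lower_central G (c - i) \<subseteq> uc G i"
proof (induction i)
  case 0 then show ?case using assms by simp
next
  case (Suc i)
  have eq: "Suc (c - Suc i) = c - i" using Suc.prems by simp
  show ?case
  proof
    fix y assume y: "y \<in> lower_central G (c - Suc i)"
    have yc: "y \<in> carrier G" using y lc_carrier by auto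
    have "x \<otimes> y \<otimes> inv x \<otimes> inv y \<in> uc G i" if x: "x \<in> carrier G" for x
    proof -
      have "x \<otimes> y \<otimes> inv x \<otimes> inv y \<in> lower_central G (Suc (c - Suc i))"
        unfolding lower_central.simps by (rule generate.incl) (use x y in blast)
      then show ?thesis using Suc eq by auto
    qed
    then show "y \<in> uc G (Suc i)" using yc by simp
  qed
qed

lemma lc1: "lower_central G 1 = commutator_subgroup G"
  unfolding commutator_subgroup_def derived_def
  by (simp add: One_nat_def) (rule arg_cong[where f = "generate G"], blast)

lemma lc_derived: "lower_central G (Suc k) \<subseteq> commutator_subgroup G"
  unfolding commutator_subgroup_def derived_def lower_central.simps
  by (rule mono_generate) (use lc_carrier[of k] in blast)

end

lemma (in group) pgroup_center:
  assumes p: "Factorial_Ring.prime (p::nat)" and fin: "finite (carrier G)"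
    and card: "card (carrier G) = p ^ m" and m: "m > 0"
  shows "\<exists>z\<in>carrier G. z \<noteq> \<one> \<and> (\<forall>x\<in>carrier G. x \<otimes> z = z \<otimes> x)"
proof (rule ccontr)
  assume nz: "\<not> ?thesis"
  define \<phi> where "\<phi> = (\<lambda>g. (\<lambda>h \<in> carrier G. g \<otimes> h \<otimes> (inv g)))"
  interpret A: group_action G "carrier G" \<phi> unfolding \<phi>_def by (rule action_by_conjugation)
  have orb1: "orbit G \<phi> \<one> = {\<one>}" unfolding orbit_def \<phi>_def by (auto intro!: exI[of _ \<one>])
  have orb_sub: "orbit G \<phi> x \<subseteq> carrier G" if "x \<in> carrier G" for x
    using that unfolding orbit_def \<phi>_def by auto
  have pdvd: "p dvd card (orbit G \<phi> x)" if x: "x \<in> carrier G" and ne: "orbit G \<phi> x \<noteq> {\<one>}" for x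
  proof -
    have xn: "x \<noteq> \<one>" using ne orb1 by auto
    then obtain g where g: "g \<in> carrier G" "g \<otimes> x \<noteq> x \<otimes> g" using nz x by auto
    have "x \<in> orbit G \<phi> x" unfolding orbit_def \<phi>_def using x by (auto intro!: exI[of _ \<one>])
    moreover have "g \<otimes> x \<otimes> inv g \<in> orbit G \<phi> x" unfolding orbit_def \<phi>_def using x g by auto
    moreover have "g \<otimes> x \<otimes> inv g \<noteq> x"
    proof
      assume "g \<otimes> x \<otimes> inv g = x"
      then have "g \<otimes> x \<otimes> inv g \<otimes> g = x \<otimes> g" by simp
      then show False using g x by (simp add: gs)
    qed
    ultimately have "card (orbit G \<phi> x) \<noteq> 1"
      using card_1_singletonE by (metis singletonD)
    moreover have "card (orbit G \<phi> x) dvd p ^ m"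
      using A.orbit_stabilizer_theorem[OF x] card unfolding order_def by (metis dvd_triv_left)
    ultimately obtain i where "i \<le> m" "card (orbit G \<phi> x) = p ^ i" "i \<noteq> 0"
      using divides_primepow_nat[OF p] by (metis power_0)
    then show ?thesis by (simp add: dvd_power)
  qed
  have fin_orbs: "finite (orbits G (carrier G) \<phi>)"
  proof -
    have "orbits G (carrier G) \<phi> \<subseteq> Pow (carrier G)" unfolding orbits_def using orb_sub by auto
    then show ?thesis using fin by (meson finite_Pow_iff finite_subset)
  qed
  have one_in: "{\<one>} \<in> orbits G (carrier G) \<phi>" unfolding orbits_def using orb1 by force
  have "(\<Sum>orb\<in>orbits G (carrier G) \<phi>. card orb) = card (carrier G)"
    using A.disjoint_sum[OF fin, of "\<lambda>_. 1::nat"] by (simp add: card_eq_sum[symmetric])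
  also have "(\<Sum>orb\<in>orbits G (carrier G) \<phi>. card orb) = card {\<one>::'a} + (\<Sum>orb\<in>orbits G (carrier G) \<phi> - {{\<one>}}. card orb)"
    using fin_orbs one_in by (meson sum.remove)
  finally have eq: "1 + (\<Sum>orb\<in>orbits G (carrier G) \<phi> - {{\<one>}}. card orb) = p ^ m" using card by simp
  have "p dvd (\<Sum>orb\<in>orbits G (carrier G) \<phi> - {{\<one>}}. card orb)"
    by (rule dvd_sum) (auto simp: orbits_def intro!: pdvd)
  moreover have "p dvd p ^ m" using m by (simp add: dvd_power)
  ultimately have "p dvd 1" using eq by (metis dvd_add_left_iff)
  then show False using p by simp
qed

lemma (in group) coset_eq_iff:
  assumes N: "N \<lhd> G" and a: "a \<in> carrier G" and b: "b \<in> carrier G"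
  shows "(N #> a = N #> b) \<longleftrightarrow> a \<otimes> inv b \<in> N"
proof -
  interpret normal N G by (rule N)
  show ?thesis
  proof
    assume "N #> a = N #> b"
    then have "a \<in> N #> b" using rcos_self[OF a subgroup_axioms] by simp
    then show "a \<otimes> inv b \<in> N" using rcos_module_imp[OF is_group b] by simp
  next
    assume "a \<otimes> inv b \<in> N"
    then have "a \<in> N #> b" using rcos_module_rev[OF is_group b a] by simp
    then show "N #> a = N #> b" using repr_independence[OF _ b subgroup_axioms] by simp
  qed
qed

locale pgrp = group +
  fixes p :: nat and n :: nat
  assumes prime_p: "Factorial_Ring.prime p" and fin: "finite (carrier G)"
    and cardG: "card (carrier G) = p ^ n"
begin

lemma p_ge2: "p \<ge> 2" using prime_p prime_ge_2_nat by blast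

lemma sub_card: assumes "subgroup H G" shows "\<exists>i\<le>n. card H = p ^ i"
proof -
  have "card H dvd p ^ n" using lagrange[OF assms] cardG unfolding order_def by (metis dvd_triv_right)
  then show ?thesis using divides_primepow_nat[OF prime_p] by auto
qed

lemma pow_lt_imp: assumes "p ^ a < p ^ b" shows "p * p ^ a \<le> p ^ b"
proof -
  have "1 < p" using p_ge2 by simp
  then have "a < b" using assms by (simp add: power_strict_increasing_iff)
  then have "p ^ Suc a \<le> p ^ b" using p_ge2 by (intro power_increasing) auto
  then show ?thesis by simp
qed

lemma sub_lt_imp: assumes "subgroup H G" "subgroup K G" "H \<subset> K" shows "p * card H \<le> card K"
proof -
  obtain a b where a: "card H = p ^ a" and b: "card K = p ^ b" using sub_card assms by meson
  have "finite K" using assms(2) fin subgroup.subset finite_subset by metis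
  then have "card H < card K" using assms(3) psubset_card_mono by blast
  then show ?thesis using a b pow_lt_imp by simp
qed

lemma quot_card: assumes "N \<lhd> G" shows "card (carrier (G Mod N)) * card N = p ^ n"
  using lagrange[OF normal_imp_subgroup[OF assms]] cardG unfolding order_def FactGroup_def by simp

lemma uc_step: assumes ne: "uc G j \<noteq> carrier G" shows "p * card (uc G j) \<le> card (uc G (Suc j))"
proof -
  let ?N = "uc G j"
  interpret N: normal ?N G by (rule uc_normal)
  let ?Q = "G Mod ?N"
  interpret Q: group ?Q by (rule N.factorgroup_is_group)
  have qc: "card (carrier ?Q) * card ?N = p ^ n" by (rule quot_card[OF uc_normal])
  then have "card (carrier ?Q) dvd p ^ n" by (metis dvd_triv_left)
  then obtain m where m: "card (carrier ?Q) = p ^ m" using divides_primepow_nat[OF prime_p] by auto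
  have finQ: "finite (carrier ?Q)" using fin unfolding carrier_FactGroup by simp
  have "m \<noteq> 0"
  proof
    assume "m = 0"
    then have "card ?N = card (carrier G)" using qc m cardG by simp
    then have "?N = carrier G" using uc_carrier fin by (metis card_subset_eq)
    then show False using ne by simp
  qed
  then obtain z where z: "z \<in> carrier ?Q" "z \<noteq> one ?Q" "\<forall>W\<in>carrier ?Q. W \<otimes>\<^bsub>?Q\<^esub> z = z \<otimes>\<^bsub>?Q\<^esub> W"
    using Q.pgroup_center[OF prime_p finQ m] by auto
  then obtain x where x: "x \<in> carrier G" "z = ?N #> x" unfolding carrier_FactGroup by auto
  have "x \<notin> ?N" using z(2) x coset_join2[OF x(1) N.subgroup_axioms] by auto
  moreover have "x \<in> uc G (Suc j)"
  proof -
    have "y \<otimes> x \<otimes> inv y \<otimes> inv x \<in> ?N" if y: "y \<in> carrier G" for y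
    proof -
      have "(?N #> y) <#> (?N #> x) = (?N #> x) <#> (?N #> y)"
        using z(3) x y unfolding carrier_FactGroup by auto
      then have "?N #> (y \<otimes> x) = ?N #> (x \<otimes> y)" using N.rcos_sum x y by simp
      then have "(y \<otimes> x) \<otimes> inv (x \<otimes> y) \<in> ?N" using coset_eq_iff[OF uc_normal] x y by simp
      then show ?thesis using x y by (simp add: gs)
    qed
    then show ?thesis using x by simp
  qed
  ultimately have "?N \<subset> uc G (Suc j)" using uc_mono_Suc by blast
  then show ?thesis using sub_lt_imp uc_subgroup by blast
qed

end

lemma (in group) comm4:
  assumes a: "a \<in> carrier G" and b: "b \<in> carrier G" and c: "c \<in> carrier G" and d: "d \<in> carrier G"
    and ac: "\<And>v. v \<in> carrier G \<Longrightarrow> a \<otimes> v = v \<otimes> a"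
    and cc: "\<And>v. v \<in> carrier G \<Longrightarrow> c \<otimes> v = v \<otimes> c"
    and bd: "b \<otimes> d = d \<otimes> b"
  shows "(a \<otimes> b) \<otimes> (c \<otimes> d) = (c \<otimes> d) \<otimes> (a \<otimes> b)"
proof -
  have "(a \<otimes> b) \<otimes> (c \<otimes> d) = a \<otimes> ((b \<otimes> c) \<otimes> d)" using a b c d by (simp add: m_assoc)
  also have "\<dots> = a \<otimes> ((c \<otimes> b) \<otimes> d)" using cc[OF b] by simp
  also have "\<dots> = (a \<otimes> c) \<otimes> (b \<otimes> d)" using a b c d by (simp add: m_assoc)
  also have "\<dots> = (c \<otimes> a) \<otimes> (d \<otimes> b)" using ac[OF c] bd by simp
  also have "\<dots> = c \<otimes> ((a \<otimes> d) \<otimes> b)" using a b c d by (simp add: m_assoc)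
  also have "\<dots> = c \<otimes> ((d \<otimes> a) \<otimes> b)" using ac[OF d] by simp
  also have "\<dots> = (c \<otimes> d) \<otimes> (a \<otimes> b)" using a b c d by (simp add: m_assoc)
  finally show ?thesis .
qed

lemma (in normal) coset_pow:
  assumes x: "x \<in> carrier G"
  shows "(H #> x) [^]\<^bsub>G Mod H\<^esub> (k::nat) = H #> (x [^] k)"
proof (induction k)
  case 0 then show ?case using subset by simp
next
  case (Suc k)
  interpret Q: group "G Mod H" by (rule factorgroup_is_group)
  have "(H #> x) [^]\<^bsub>G Mod H\<^esub> (Suc k) = (H #> x) [^]\<^bsub>G Mod H\<^esub> k \<otimes>\<^bsub>G Mod H\<^esub> (H #> x)"
    by (rule Q.nat_pow_Suc)
  also have "\<dots> = (H #> (x [^] k)) <#> (H #> x)" using Suc by simp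
  also have "\<dots> = H #> (x [^] k \<otimes> x)" using rcos_sum x by simp
  finally show ?case by simp
qed

lemma (in group) cyc_mod_center:
  assumes x: "x \<in> carrier G"
    and h: "\<forall>y\<in>carrier G. \<exists>k::nat. y \<otimes> inv (x [^] k) \<in> uc G (Suc j)"
  shows "uc G (Suc j) = carrier G"
proof -
  let ?M = "uc G j" and ?U = "uc G (Suc j)"
  interpret M: normal ?M G by (rule uc_normal)
  interpret Q: group "G Mod ?M" by (rule M.factorgroup_is_group)
  have cent: "(?M #> u) <#> (?M #> v) = (?M #> v) <#> (?M #> u)" if u: "u \<in> ?U" and v: "v \<in> carrier G" for u v
  proof -
    have uc: "u \<in> carrier G" using u by simp
    have "v \<otimes> u \<otimes> inv v \<otimes> inv u \<in> ?M" using u v by simp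
    then have "(u \<otimes> v) \<otimes> inv (v \<otimes> u) \<in> ?M"
      using M.m_inv_closed[of "v \<otimes> u \<otimes> inv v \<otimes> inv u"] uc v
      by (simp add: gs)
    then have "?M #> (u \<otimes> v) = ?M #> (v \<otimes> u)" using coset_eq_iff[OF uc_normal] uc v by simp
    then show ?thesis using M.rcos_sum uc v by simp
  qed
  have "y \<in> ?U" if y: "y \<in> carrier G" for y
  proof -
    have "w \<otimes> y \<otimes> inv w \<otimes> inv y \<in> ?M" if w: "w \<in> carrier G" for w
    proof -
      obtain k1 :: nat where k1: "w \<otimes> inv (x [^] k1) \<in> ?U" using h w by blast
      obtain k2 :: nat where k2: "y \<otimes> inv (x [^] k2) \<in> ?U" using h y by blast
      define m where "m = w \<otimes> inv (x [^] k1)"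
      define n' where "n' = y \<otimes> inv (x [^] k2)"
      have mc: "m \<in> carrier G" and nc: "n' \<in> carrier G" using w y x unfolding m_def n'_def by auto
      have we: "w = m \<otimes> x [^] k1" using w x unfolding m_def by (simp add: gs)
      have ye: "y = n' \<otimes> x [^] k2" using y x unfolding n'_def by (simp add: gs)
      let ?A = "?M #> m" and ?B = "?M #> (x [^] k1)" and ?C = "?M #> n'" and ?D = "?M #> (x [^] k2)"
      have inQ: "?M #> v \<in> carrier (G Mod ?M)" if "v \<in> carrier G" for v
        using that unfolding carrier_FactGroup by auto
      have cA: "?A \<otimes>\<^bsub>G Mod ?M\<^esub> V = V \<otimes>\<^bsub>G Mod ?M\<^esub> ?A" if "V \<in> carrier (G Mod ?M)" for V
        using that cent[OF k1[folded m_def]] unfolding carrier_FactGroup by auto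
      have cC: "?C \<otimes>\<^bsub>G Mod ?M\<^esub> V = V \<otimes>\<^bsub>G Mod ?M\<^esub> ?C" if "V \<in> carrier (G Mod ?M)" for V
        using that cent[OF k2[folded n'_def]] unfolding carrier_FactGroup by auto
      have bd: "?B \<otimes>\<^bsub>G Mod ?M\<^esub> ?D = ?D \<otimes>\<^bsub>G Mod ?M\<^esub> ?B"
        using M.rcos_sum x by (simp add: nat_pow_mult add.commute)
      have "(?A \<otimes>\<^bsub>G Mod ?M\<^esub> ?B) \<otimes>\<^bsub>G Mod ?M\<^esub> (?C \<otimes>\<^bsub>G Mod ?M\<^esub> ?D) = (?C \<otimes>\<^bsub>G Mod ?M\<^esub> ?D) \<otimes>\<^bsub>G Mod ?M\<^esub> (?A \<otimes>\<^bsub>G Mod ?M\<^esub> ?B)"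
        by (rule Q.comm4[OF inQ inQ inQ inQ cA cC bd]) (use mc nc x in auto)
      then have "?M #> (w \<otimes> y) = ?M #> (y \<otimes> w)"
        unfolding we ye using M.rcos_sum mc nc x by simp
      then have "(w \<otimes> y) \<otimes> inv (y \<otimes> w) \<in> ?M" using coset_eq_iff[OF uc_normal] w y by simp
      then show ?thesis using w y by (simp add: gs)
    qed
    then show ?thesis using y by simp
  qed
  then show ?thesis using uc_carrier by blast
qed

locale mainctx = pgrp +
  assumes ZG: "\<not> center G \<subseteq> commutator_subgroup G"
    and cls: "nilpotency_class G \<ge> 3"
    and nc: "n = nilpotency_class G + 2"
begin

abbreviation "c \<equiv> nilpotency_class G"

lemma uc_card_le: "card (uc G k) \<le> p ^ n"
  using card_mono[OF fin uc_carrier] cardG by simp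

lemma uc_reach: "\<exists>k. uc G k = carrier G"
proof (rule ccontr)
  assume "\<not> ?thesis"
  then have ne: "\<And>k. uc G k \<noteq> carrier G" by auto
  have ge: "p ^ k \<le> card (uc G k)" for k
  proof (induction k)
    case 0 then show ?case by simp
  next
    case (Suc k)
    have "p ^ Suc k = p * p ^ k" by simp
    also have "\<dots> \<le> p * card (uc G k)" using Suc by simp
    also have "\<dots> \<le> card (uc G (Suc k))" by (rule uc_step[OF ne])
    finally show ?case .
  qed
  have "p ^ Suc n \<le> p ^ n" using ge[of "Suc n"] uc_card_le[of "Suc n"] by linarith
  moreover have "p ^ n < p ^ Suc n" using p_ge2 by simp
  ultimately show False by simp
qed

lemma lc_c: "lower_central G c = {\<one>}"
proof -
  obtain k where k: "uc G k = carrier G" using uc_reach by blast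
  have "lower_central G k \<subseteq> {\<one>}" using lc_uc[OF k, of k] by simp
  moreover have "\<one> \<in> lower_central G k" using subgroup.one_closed[OF lc_subgroup] by blast
  ultimately have "lower_central G k = {\<one>}" by blast
  then show ?thesis unfolding nilpotency_class_def by (rule LeastI)
qed

lemma lc_c1: "lower_central G (c - 1) \<noteq> {\<one>}"
proof -
  have "c - 1 < c" using cls by simp
  then show ?thesis using not_less_Least unfolding nilpotency_class_def by blast
qed

lemma uc_c: "uc G c = carrier G"
  using uc_lc[OF lc_c, of c] uc_carrier by auto

lemma uc_c1: "uc G (c - 1) \<noteq> carrier G"
proof
  assume h: "uc G (c - 1) = carrier G"
  have "lower_central G (c - 1) \<subseteq> {\<one>}" using lc_uc[OF h, of "c - 1"] by simp
  moreover have "\<one> \<in> lower_central G (c - 1)" using subgroup.one_closed[OF lc_subgroup] by blast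
  ultimately show False using lc_c1 by blast
qed

lemma uc_ne: assumes "j < c" shows "uc G j \<noteq> carrier G"
proof
  assume "uc G j = carrier G"
  then have "carrier G \<subseteq> uc G (c - 1)" using uc_mono[of j "c - 1"] assms by simp
  then show False using uc_c1 uc_carrier by blast
qed

lemma chain: "j + i \<le> c \<Longrightarrow> p ^ i * card (uc G j) \<le> card (uc G (j + i))"
proof (induction i)
  case 0 then show ?case by simp
next
  case (Suc i)
  have "p ^ Suc i * card (uc G j) = p * (p ^ i * card (uc G j))" by simp
  also have "\<dots> \<le> p * card (uc G (j + i))" using Suc by simp
  also have "\<dots> \<le> card (uc G (Suc (j + i)))" by (rule uc_step[OF uc_ne]) (use Suc.prems in simp)
  finally show ?case by simp
qed

lemma Z_big: "p ^ 2 \<le> card (uc G 1)"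
proof -
  have s1: "lower_central G (c - 1) \<subseteq> uc G 1" using uc_lc[OF lc_c, of 1] cls by simp
  have s2: "lower_central G (c - 1) \<subseteq> commutator_subgroup G"
    using lc_derived[of "c - 2"] cls by (simp add: numeral_2_eq_2 Suc_diff_Suc)
  have "\<one> \<in> lower_central G (c - 1)" using subgroup.one_closed[OF lc_subgroup] by blast
  then obtain y where y: "y \<in> lower_central G (c - 1)" "y \<noteq> \<one>" using lc_c1 by blast
  have yc: "y \<in> carrier G" using y lc_carrier by blast
  define H where "H = generate G {y}"
  have Hsub: "subgroup H G" unfolding H_def using yc by (intro generate_is_subgroup) auto
  have HZ: "H \<subseteq> uc G 1" unfolding H_def using y s1 by (intro generate_subgroup_incl[OF _ uc_subgroup]) auto
  have csub: "subgroup (commutator_subgroup G) G" using lc_subgroup[of 1] lc1 by simp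
  have HC: "H \<subseteq> commutator_subgroup G" unfolding H_def using y s2 by (intro generate_subgroup_incl[OF _ csub]) auto
  have finZ: "finite (uc G 1)" using fin uc_carrier finite_subset by blast
  have "{\<one>, y} \<subseteq> H" unfolding H_def by (auto intro: generate.one generate.incl)
  moreover have "card {\<one>, y} = 2" using y(2) by simp
  ultimately have "2 \<le> card H" using card_mono[OF finite_subset[OF HZ finZ]] by metis
  obtain k where k: "card H = p ^ k" using sub_card[OF Hsub] by blast
  obtain i where i: "card (uc G 1) = p ^ i" using sub_card[OF uc_subgroup] by blast
  have "k \<noteq> 0" using k \<open>2 \<le> card H\<close> by (cases k) auto
  have le: "p ^ k \<le> p ^ i" using card_mono[OF finZ HZ] k i by simp
  show ?thesis
  proof (rule ccontr)
    assume "\<not> ?thesis"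
    then have "p ^ i < p ^ 2" using i by simp
    then have "i < 2" using p_ge2 by (simp add: power_strict_increasing_iff)
    moreover have "k \<le> i" using le p_ge2 by (simp add: power_increasing_iff)
    ultimately have "k = i" using \<open>k \<noteq> 0\<close> by simp
    then have "H = uc G 1" using card_subset_eq[OF finZ HZ] k i by simp
    then show False using HC ZG uc_one by simp
  qed
qed

end

declare uc.simps(2)[simp del]

context mainctx begin

lemma top_step: "p ^ 2 * card (uc G (c - 1)) \<le> p ^ n"
proof -
  let ?N = "uc G (c - 1)"
  interpret N: normal ?N G by (rule uc_normal)
  let ?Q = "G Mod ?N"
  interpret Q: group ?Q by (rule N.factorgroup_is_group)
  have qc: "card (carrier ?Q) * card ?N = p ^ n" by (rule quot_card[OF uc_normal])
  then have "card (carrier ?Q) dvd p ^ n" by (metis dvd_triv_left)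
  then obtain m where m: "card (carrier ?Q) = p ^ m" using divides_primepow_nat[OF prime_p] by auto
  have finQ: "finite (carrier ?Q)" using fin unfolding carrier_FactGroup by simp
  have m0: "m \<noteq> 0"
  proof
    assume "m = 0"
    then have "card ?N = card (carrier G)" using qc m cardG by simp
    then have "?N = carrier G" using uc_carrier fin by (metis card_subset_eq)
    then show False using uc_c1 by simp
  qed
  have m1: "m \<noteq> 1"
  proof
    assume "m = 1"
    then have cQ: "card (carrier ?Q) = p" using m by simp
    obtain x where x: "x \<in> carrier G" "x \<notin> ?N" using uc_c1 uc_carrier by blast
    let ?X = "?N #> x"
    have XQ: "?X \<in> carrier ?Q" using x unfolding carrier_FactGroup by auto
    have X1: "?X \<noteq> \<one>\<^bsub>?Q\<^esub>"
    proof
      assume "?X = \<one>\<^bsub>?Q\<^esub>"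
      then have "?N #> x = ?N #> \<one>" using coset_mult_one[OF uc_carrier] by simp
      then have "x \<otimes> inv \<one> \<in> ?N" using coset_eq_iff[OF uc_normal] x by simp
      then show False using x by simp
    qed
    have "Q.ord ?X dvd p" using Q.ord_dvd_group_order[OF XQ] cQ unfolding order_def by simp
    moreover have "Q.ord ?X \<noteq> 1" using Q.ord_eq_1[OF XQ] X1 by simp
    ultimately have "Q.ord ?X = p" using prime_p by (metis prime_nat_iff)
    then have "card (generate ?Q {?X}) = card (carrier ?Q)" using Q.generate_pow_card[OF XQ] cQ by simp
    moreover have "generate ?Q {?X} \<subseteq> carrier ?Q" using XQ by (intro Q.generate_incl) auto
    ultimately have gen: "generate ?Q {?X} = carrier ?Q" using finQ by (metis card_subset_eq)
    have "\<forall>y\<in>carrier G. \<exists>k::nat. y \<otimes> inv (x [^] k) \<in> uc G (Suc (c - 2))"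
    proof
      fix y assume y: "y \<in> carrier G"
      have "?N #> y \<in> carrier ?Q" using y unfolding carrier_FactGroup by auto
      then obtain k :: nat where "?N #> y = ?X [^]\<^bsub>?Q\<^esub> k"
        using gen Q.generate_pow_on_finite_carrier[OF finQ XQ] by auto
      then have "?N #> y = ?N #> (x [^] k)" using N.coset_pow[OF x(1)] by simp
      then have "y \<otimes> inv (x [^] k) \<in> ?N" using coset_eq_iff[OF uc_normal] x y by simp
      moreover have "Suc (c - 2) = c - 1" using cls by simp
      ultimately show "\<exists>k::nat. y \<otimes> inv (x [^] k) \<in> uc G (Suc (c - 2))" by auto
    qed
    then have "uc G (Suc (c - 2)) = carrier G" by (rule cyc_mod_center[OF x(1)])
    moreover have "Suc (c - 2) = c - 1" using cls by simp
    ultimately show False using uc_c1 by simp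
  qed
  have "p ^ 2 \<le> p ^ m" using m0 m1 p_ge2 by (intro power_increasing) auto
  then have h: "p ^ 2 * card ?N \<le> p ^ m * card ?N" by simp
  have eq: "p ^ m * card ?N = p ^ n" using qc m by simp
  show ?thesis using h unfolding eq .
qed

lemma counts: "card (uc G 1) = p ^ 2" "card (uc G 2) \<le> p ^ 3" "card (uc G (c - 1)) = p ^ c"
proof -
  have pp: "0 < p" using p_ge2 by simp
  have a: "p ^ (c - 2) * card (uc G 1) \<le> card (uc G (c - 1))"
  proof -
    have "1 + (c - 2) = c - 1" using cls by simp
    then show ?thesis using chain[of 1 "c - 2"] cls by simp
  qed
  have b: "p ^ (c - 3) * card (uc G 2) \<le> card (uc G (c - 1))"
  proof -
    have "2 + (c - 3) = c - 1" using cls by simp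
    then show ?thesis using chain[of 2 "c - 3"] cls by simp
  qed
  have t: "p ^ 2 * card (uc G (c - 1)) \<le> p ^ (c + 2)" using top_step nc by simp
  have e1: "p ^ (c + 2) = p ^ c * p ^ 2" by (rule power_add)
  have c2: "c = 2 + (c - 2)" using cls by simp
  have e2: "p ^ c = p ^ 2 * p ^ (c - 2)" by (subst c2) (rule power_add)
  have c3: "c + 2 = 2 + (c - 3) + 3" using cls by simp
  have e3: "p ^ (c + 2) = p ^ 2 * p ^ (c - 3) * p ^ 3" by (subst c3) (simp only: power_add)
  have "p ^ 2 * (p ^ (c - 2) * card (uc G 1)) \<le> p ^ 2 * (p ^ (c - 2) * p ^ 2)"
  proof -
    have "p ^ 2 * (p ^ (c - 2) * card (uc G 1)) \<le> p ^ 2 * card (uc G (c - 1))" using a by simp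
    also have "\<dots> \<le> p ^ (c + 2)" by (rule t)
    also have "\<dots> = p ^ 2 * (p ^ (c - 2) * p ^ 2)" using e1 e2 by simp
    finally show ?thesis .
  qed
  then have "card (uc G 1) \<le> p ^ 2" using pp by simp
  then show c1: "card (uc G 1) = p ^ 2" using Z_big by simp
  have "p ^ 2 * (p ^ (c - 3) * card (uc G 2)) \<le> p ^ 2 * (p ^ (c - 3) * p ^ 3)"
  proof -
    have "p ^ 2 * (p ^ (c - 3) * card (uc G 2)) \<le> p ^ 2 * card (uc G (c - 1))" using b by simp
    also have "\<dots> \<le> p ^ (c + 2)" by (rule t)
    also have "\<dots> = p ^ 2 * (p ^ (c - 3) * p ^ 3)" using e3 by simp
    finally show ?thesis .
  qed
  then show "card (uc G 2) \<le> p ^ 3" using pp by simp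
  have "p ^ 2 * card (uc G (c - 1)) \<le> p ^ 2 * p ^ c" using t e1 by (metis mult.commute)
  moreover have "0 < p ^ 2" using pp by simp
  ultimately have "card (uc G (c - 1)) \<le> p ^ c" by (meson mult_le_cancel1)
  moreover have "p ^ c \<le> card (uc G (c - 1))" using a c1 e2 by (metis mult.commute)
  ultimately show "card (uc G (c - 1)) = p ^ c" by simp
qed

end

context group begin

lemma inner_aut_eq: "inner_aut G = (\<lambda>g. \<lambda>h \<in> carrier G. g \<otimes> h \<otimes> inv g)"
  unfolding inner_aut_def by (rule ext) simp

lemma inner_aut_hom: "inner_aut G \<in> hom G (BijGroup (carrier G))"
  unfolding inner_aut_eq by (rule conjugation_is_hom)

lemma inner_aut_mult:
  assumes "g \<in> carrier G" "h \<in> carrier G"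
  shows "inner_aut G (g \<otimes> h) = inner_aut G g \<otimes>\<^bsub>BijGroup (carrier G)\<^esub> inner_aut G h"
  using inner_aut_hom assms by (simp add: hom_mult)

lemma InnGroup_mult: "monoid.mult (InnGroup G) = monoid.mult (BijGroup (carrier G))"
  unfolding InnGroup_def AutoGroup_def by simp

lemma inner_aut_app: "x \<in> carrier G \<Longrightarrow> inner_aut G g x = g \<otimes> x \<otimes> inv g"
  unfolding inner_aut_def by simp

lemma center_Inn_sub: "center (InnGroup G) \<subseteq> inner_aut G ` uc G 2"
proof
  fix \<sigma> assume s: "\<sigma> \<in> center (InnGroup G)"
  then have "\<sigma> \<in> Inn G" unfolding center_def InnGroup_def by simp
  then obtain g where g: "g \<in> carrier G" "\<sigma> = inner_aut G g" unfolding Inn_def by auto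
  have comm: "inner_aut G g \<otimes>\<^bsub>BijGroup (carrier G)\<^esub> inner_aut G h = inner_aut G h \<otimes>\<^bsub>BijGroup (carrier G)\<^esub> inner_aut G g"
    if h: "h \<in> carrier G" for h
  proof -
    have "inner_aut G h \<in> Inn G" using h unfolding Inn_def by auto
    then show ?thesis using s g unfolding center_def InnGroup_mult by (auto simp: InnGroup_def)
  qed
  have "h \<otimes> g \<otimes> inv h \<otimes> inv g \<in> uc G 1" if h: "h \<in> carrier G" for h
  proof -
    let ?h = "inv h"
    have hc: "?h \<in> carrier G" using h by simp
    have e: "inner_aut G (g \<otimes> ?h) = inner_aut G (?h \<otimes> g)"
      using comm[OF hc] inner_aut_mult g(1) hc by simp
    let ?A = "g \<otimes> ?h" and ?B = "?h \<otimes> g"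
    have Ac: "?A \<in> carrier G" and Bc: "?B \<in> carrier G" using g hc by auto
    define t where "t = inv ?B \<otimes> ?A"
    have tc: "t \<in> carrier G" unfolding t_def using Ac Bc by simp
    have tx: "t \<otimes> x = x \<otimes> t" if x: "x \<in> carrier G" for x
    proof -
      have ex: "?A \<otimes> x \<otimes> inv ?A = ?B \<otimes> x \<otimes> inv ?B"
        using fun_cong[OF e, of x] x by (simp add: inner_aut_app)
      have "t \<otimes> x = inv ?B \<otimes> (?A \<otimes> x \<otimes> inv ?A) \<otimes> ?A" unfolding t_def using Ac Bc x by (simp add: m_assoc)
      also have "\<dots> = inv ?B \<otimes> (?B \<otimes> x \<otimes> inv ?B) \<otimes> ?A" using ex by simp
      also have "\<dots> = x \<otimes> t" unfolding t_def using Ac Bc x by (simp add: m_assoc)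
      finally show ?thesis .
    qed
    have "t \<in> uc G 1" unfolding uc_one center_def using tc tx by auto
    then have "g \<otimes> t \<otimes> inv g \<in> uc G 1" using normal.inv_op_closed2[OF uc_normal g(1)] by simp
    moreover have "g \<otimes> t \<otimes> inv g = h \<otimes> g \<otimes> inv h \<otimes> inv g" unfolding t_def using g h by (simp add: gs)
    ultimately show ?thesis by simp
  qed
  moreover have "uc G 2 = {y \<in> carrier G. \<forall>x\<in>carrier G. x \<otimes> y \<otimes> inv x \<otimes> inv y \<in> uc G 1}"
    using uc.simps(2)[of G 1] by (simp add: numeral_2_eq_2)
  ultimately have "g \<in> uc G 2" using g by simp
  then show "\<sigma> \<in> inner_aut G ` uc G 2" using g by simp
qed

lemma fiber_card:
  assumes fin: "finite (carrier G)"
  shows "card (inner_aut G ` uc G 2) * card (uc G 1) \<le> card (uc G 2)"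
proof -
  let ?I = "inner_aut G ` uc G 2"
  define F where "F = (\<lambda>\<sigma>. {g \<in> uc G 2. inner_aut G g = \<sigma>})"
  have fin2: "finite (uc G 2)" using fin uc_carrier finite_subset by blast
  have U: "uc G 2 = (\<Union>\<sigma>\<in>?I. F \<sigma>)" unfolding F_def by auto
  have ce: "card (\<Union>\<sigma>\<in>?I. F \<sigma>) = (\<Sum>\<sigma>\<in>?I. card (F \<sigma>))"
  proof (rule card_UN_disjoint)
    show "finite ?I" using fin2 by simp
    show "\<forall>\<sigma>\<in>?I. finite (F \<sigma>)" unfolding F_def using fin2 by simp
    show "\<forall>\<sigma>\<in>?I. \<forall>\<tau>\<in>?I. \<sigma> \<noteq> \<tau> \<longrightarrow> F \<sigma> \<inter> F \<tau> = {}" unfolding F_def by auto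
  qed
  have "card (uc G 2) = (\<Sum>\<sigma>\<in>?I. card (F \<sigma>))" by (rule trans[OF arg_cong[OF U, of card] ce])
  moreover have "card (uc G 1) \<le> card (F \<sigma>)" if sI: "\<sigma> \<in> ?I" for \<sigma>
  proof -
    obtain g where g: "g \<in> uc G 2" "\<sigma> = inner_aut G g" using sI by auto
    have gc: "g \<in> carrier G" using g uc_carrier by blast
    have "(\<lambda>z. g \<otimes> z) ` uc G 1 \<subseteq> F \<sigma>"
    proof
      fix y assume "y \<in> (\<lambda>z. g \<otimes> z) ` uc G 1"
      then obtain z where z: "z \<in> uc G 1" "y = g \<otimes> z" by auto
      have zc: "z \<in> carrier G" and zx: "\<And>x. x \<in> carrier G \<Longrightarrow> z \<otimes> x = x \<otimes> z"
        using z unfolding uc_one center_def by auto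
      have "z \<in> uc G 2" using z uc_mono[of 1 2] by auto
      then have y2: "y \<in> uc G 2" using z g subgroup.m_closed[OF uc_subgroup] by simp
      have "inner_aut G y = inner_aut G g"
      proof
        fix x show "inner_aut G y x = inner_aut G g x"
        proof (cases "x \<in> carrier G")
          case True
          have "g \<otimes> z \<otimes> x \<otimes> inv (g \<otimes> z) = g \<otimes> (z \<otimes> x) \<otimes> inv z \<otimes> inv g" using gc zc True by (simp add: gs)
          also have "\<dots> = g \<otimes> x \<otimes> inv g" using zx[OF True] gc zc True by (simp add: gs)
          finally show ?thesis using True z by (simp add: inner_aut_app)
        next
          case False then show ?thesis by (simp add: inner_aut_def)
        qed
      qed
      then show "y \<in> F \<sigma>" unfolding F_def using y2 g by simp
    qed
    moreover have "inj_on (\<lambda>z. g \<otimes> z) (uc G 1)" by (rule inj_onI) (meson gc l_cancel subsetD uc_carrier)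
    moreover have "finite (F \<sigma>)" unfolding F_def using fin2 by simp
    ultimately show ?thesis by (metis card_image card_mono)
  qed
  then have "card ?I * card (uc G 1) \<le> (\<Sum>\<sigma>\<in>?I. card (F \<sigma>))"
    using sum_bounded_below[of ?I "card (uc G 1)" "\<lambda>\<sigma>. card (F \<sigma>)"] by simp
  ultimately show ?thesis by simp
qed

end

context mainctx begin

lemma center_Inn_small: "card (center (InnGroup G)) \<le> p" "finite (center (InnGroup G))"
proof -
  have fin2: "finite (uc G 2)" using fin uc_carrier finite_subset by blast
  have fI: "finite (inner_aut G ` uc G 2)" using fin2 by simp
  then show "finite (center (InnGroup G))" using center_Inn_sub finite_subset by blast
  have "card (inner_aut G ` uc G 2) * p ^ 2 \<le> p ^ 3" using fiber_card[OF fin] counts by simp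
  then have "card (inner_aut G ` uc G 2) * p ^ 2 \<le> p * p ^ 2" by (simp add: power_Suc numeral_3_eq_3 numeral_2_eq_2)
  then have "card (inner_aut G ` uc G 2) \<le> p" using p_ge2 by simp
  then show "card (center (InnGroup G)) \<le> p" using card_mono[OF fI center_Inn_sub] by simp
qed

end

context mainctx begin

abbreviation "NN \<equiv> uc G (c - 1)"
abbreviation "QQ \<equiv> G Mod NN"

lemma NN_normal: "NN \<lhd> G" by (rule uc_normal)
lemma QQ_group: "group QQ" by (rule normal.factorgroup_is_group[OF NN_normal])

lemma comm_NN: "commutator_subgroup G \<subseteq> NN"
  using uc_lc[OF lc_c, of "c - 1"] lc1 cls by simp

lemma Z_NN: "uc G 1 \<subseteq> NN" using uc_mono[of 1 "c - 1"] cls by simp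

lemma QQ_card: "card (carrier QQ) = p ^ 2"
proof -
  have "card (carrier QQ) * p ^ c = p ^ (c + 2)"
    using quot_card[OF NN_normal] counts(3) nc by simp
  also have "\<dots> = p ^ 2 * p ^ c" by (metis power_add mult.commute)
  finally have "card (carrier QQ) * p ^ c = p ^ 2 * p ^ c" .
  moreover have "0 < p ^ c" using p_ge2 by simp
  ultimately show ?thesis by (metis mult_right_cancel not_less_zero)
qed

lemma QQ_fin: "finite (carrier QQ)" using fin unfolding carrier_FactGroup by simp

lemma QQ_comm: "comm_group QQ"
proof (rule group.group_comm_groupI[OF QQ_group])
  fix V W assume V: "V \<in> carrier QQ" and W: "W \<in> carrier QQ"
  then obtain x y where x: "x \<in> carrier G" "V = NN #> x" and y: "y \<in> carrier G" "W = NN #> y"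
    unfolding carrier_FactGroup by auto
  interpret N: normal NN G by (rule NN_normal)
  have "x \<otimes> y \<otimes> inv x \<otimes> inv y \<in> commutator_subgroup G"
    unfolding commutator_subgroup_def derived_def using x y by (intro generate.incl) blast
  then have "(x \<otimes> y) \<otimes> inv (y \<otimes> x) \<in> NN" using comm_NN x y by (auto simp: gs)
  then have "NN #> (x \<otimes> y) = NN #> (y \<otimes> x)" using coset_eq_iff[OF NN_normal] x y by simp
  then show "V \<otimes>\<^bsub>QQ\<^esub> W = W \<otimes>\<^bsub>QQ\<^esub> V" using x y N.rcos_sum by simp
qed

lemma no_gen: assumes x: "x \<in> carrier G" shows "generate QQ {NN #> x} \<noteq> carrier QQ"
proof
  assume gen: "generate QQ {NN #> x} = carrier QQ"
  interpret N: normal NN G by (rule NN_normal)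
  interpret Q: group QQ by (rule QQ_group)
  have XQ: "NN #> x \<in> carrier QQ" using x unfolding carrier_FactGroup by auto
  have "\<forall>y\<in>carrier G. \<exists>k::nat. y \<otimes> inv (x [^] k) \<in> uc G (Suc (c - 2))"
  proof
    fix y assume y: "y \<in> carrier G"
    have "NN #> y \<in> carrier QQ" using y unfolding carrier_FactGroup by auto
    then obtain k :: nat where "NN #> y = (NN #> x) [^]\<^bsub>QQ\<^esub> k"
      using gen Q.generate_pow_on_finite_carrier[OF QQ_fin XQ] by auto
    then have "NN #> y = NN #> (x [^] k)" using N.coset_pow[OF x] by simp
    then have "y \<otimes> inv (x [^] k) \<in> NN" using coset_eq_iff[OF NN_normal] x y by simp
    moreover have "Suc (c - 2) = c - 1" using cls by simp
    ultimately show "\<exists>k::nat. y \<otimes> inv (x [^] k) \<in> uc G (Suc (c - 2))" by auto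
  qed
  then have "uc G (Suc (c - 2)) = carrier G" by (rule cyc_mod_center[OF x])
  moreover have "Suc (c - 2) = c - 1" using cls by simp
  ultimately show False using uc_c1 by simp
qed

lemma QQ_exp: assumes V: "V \<in> carrier QQ" shows "V [^]\<^bsub>QQ\<^esub> p = \<one>\<^bsub>QQ\<^esub>"
proof -
  interpret Q: group QQ by (rule QQ_group)
  obtain x where x: "x \<in> carrier G" "V = NN #> x" using V unfolding carrier_FactGroup by auto
  have "Q.ord V dvd p ^ 2" using Q.ord_dvd_group_order[OF V] QQ_card unfolding order_def by simp
  then obtain i where i: "i \<le> 2" "Q.ord V = p ^ i" using divides_primepow_nat[OF prime_p] by auto
  have "i \<noteq> 2"
  proof
    assume "i = 2"
    then have "card (generate QQ {V}) = card (carrier QQ)" using Q.generate_pow_card[OF V] QQ_card i by simp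
    moreover have "generate QQ {V} \<subseteq> carrier QQ" using V by (intro Q.generate_incl) auto
    ultimately have "generate QQ {V} = carrier QQ" using QQ_fin by (metis card_subset_eq)
    then show False using no_gen[OF x(1)] x(2) by simp
  qed
  then have "Q.ord V dvd p" using i by (cases i) (auto simp: numeral_2_eq_2 le_Suc_eq)
  then show ?thesis using Q.pow_eq_id[OF V] by simp
qed

end

context group begin

lemma ord_p:
  assumes p: "Factorial_Ring.prime (p::nat)" and A: "A \<in> carrier G" "A \<noteq> \<one>" "A [^] p = \<one>"
  shows "ord A = p"
proof -
  have "ord A dvd p" using pow_eq_id[OF A(1)] A(3) by simp
  moreover have "ord A \<noteq> 1" using ord_eq_1[OF A(1)] A(2) by simp
  ultimately show ?thesis using p by (metis prime_nat_iff)
qed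

lemma pow_in_gen: assumes "A \<in> carrier G" shows "A [^] (k::nat) \<in> generate G {A}"
proof (induction k)
  case 0 then show ?case using generate.one by simp
next
  case (Suc k)
  have "A \<in> generate G {A}" by (rule generate.incl) simp
  then show ?case using Suc generate.eng by (simp add: nat_pow_Suc)
qed

end

context comm_group begin

lemma basis:
  assumes p: "Factorial_Ring.prime (p::nat)" and fin: "finite (carrier G)"
    and card: "card (carrier G) = p ^ 2" and exp: "\<And>V. V \<in> carrier G \<Longrightarrow> V [^] p = \<one>"
  shows "\<exists>A B. A \<in> carrier G \<and> B \<in> carrier G \<and>
     bij_betw (\<lambda>(i, j). A [^] i \<otimes> B [^] j) ({..<p} \<times> {..<p}) (carrier G)"
proof -
  have p2: "p \<ge> 2" using p prime_ge_2_nat by blast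
  have "card (carrier G) > 1" using card p2 by (metis one_less_power pos2 less_le_trans not_less_eq_eq numeral_2_eq_2 Suc_1 lessI)
  then obtain A where A: "A \<in> carrier G" "A \<noteq> \<one>"
    by (metis card_le_Suc0_iff_eq fin not_le one_closed One_nat_def)
  have oA: "ord A = p" using ord_p[OF p A exp[OF A(1)]] .
  let ?H = "generate G {A}"
  have Hsub: "subgroup ?H G" using A by (intro generate_is_subgroup) auto
  have cH: "card ?H = p" using generate_pow_card[OF A(1)] oA by simp
  have "?H \<noteq> carrier G" using cH card p2 by (metis less_irrefl power_one_right power_strict_increasing_iff one_less_numeral_iff semiring_norm(76) le_less_trans Suc_1 lessI less_le_trans)
  then obtain B where B: "B \<in> carrier G" "B \<notin> ?H" using subgroup.subset[OF Hsub] by blast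
  have B1: "B \<noteq> \<one>" using B generate.one by metis
  have oB: "ord B = p" using ord_p[OF p B(1) B1 exp[OF B(1)]] .
  have key: False if lj: "l < j" "j < p" and eq: "A [^] i \<otimes> B [^] j = A [^] k \<otimes> B [^] l" for i j k l :: nat
  proof -
    define d where "d = j - l"
    have d: "0 < d" "d < p" using lj unfolding d_def by auto
    have "B [^] j = B [^] d \<otimes> B [^] l" unfolding d_def using B(1) lj by (simp add: nat_pow_mult)
    then have "A [^] i \<otimes> B [^] d \<otimes> B [^] l = A [^] k \<otimes> B [^] l" using eq A B by (simp add: m_assoc)
    then have "A [^] i \<otimes> B [^] d = A [^] k" using A B by simp
    then have Bd: "B [^] d = inv (A [^] i) \<otimes> A [^] k" using A B by (metis inv_solve_left' nat_pow_closed)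
    have BdH: "B [^] d \<in> ?H" unfolding Bd using pow_in_gen[OF A(1)] subgroup.m_closed[OF Hsub] subgroup.m_inv_closed[OF Hsub] by simp
    have Bdc: "B [^] d \<in> carrier G" using B by simp
    have "B [^] d \<noteq> \<one>" using pow_eq_id[OF B(1)] oB d by (auto dest: dvd_imp_le)
    moreover have "(B [^] d) [^] p = \<one>" using exp[OF Bdc] .
    ultimately have oBd: "ord (B [^] d) = p" using ord_p[OF p Bdc] by simp
    let ?K = "generate G {B [^] d}" and ?L = "generate G {B}"
    have "?K \<subseteq> ?L"
      using pow_in_gen[OF B(1)] B by (intro generate_subgroup_incl generate_is_subgroup) auto
    moreover have "card ?K = card ?L" using generate_pow_card[OF Bdc] generate_pow_card[OF B(1)] oBd oB by simp
    moreover have "finite ?L" using fin generate_incl B(1) finite_subset by (metis empty_subsetI insert_subset)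
    ultimately have "?K = ?L" by (metis card_subset_eq)
    moreover have "?K \<subseteq> ?H" using BdH by (intro generate_subgroup_incl[OF _ Hsub]) auto
    moreover have "B \<in> ?L" by (rule generate.incl) simp
    ultimately show False using B(2) by blast
  qed
  have inj: "inj_on (\<lambda>(i, j). A [^] i \<otimes> B [^] j) ({..<p} \<times> {..<p})"
  proof (rule inj_onI, clarsimp)
    fix i j k l :: nat
    assume i: "i < p" "j < p" "k < p" "l < p" and eq: "A [^] i \<otimes> B [^] j = A [^] k \<otimes> B [^] l"
    have jl: "j = l"
    proof (rule linorder_cases[of j l])
      assume "j < l" then show ?thesis using key[of j l k i] i eq by simp
    next
      assume "l < j" then show ?thesis using key[of l j i k] i eq by simp
    qed
    then have "A [^] i = A [^] k" using eq A B by simp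
    moreover have "i \<in> {0 .. ord A - 1}" "k \<in> {0 .. ord A - 1}" using i oA by auto
    ultimately have "i = k" using ord_inj[OF A(1)] by (meson inj_onD)
    then show "i = k \<and> j = l" using jl by simp
  qed
  have img: "(\<lambda>(i, j). A [^] i \<otimes> B [^] j) ` ({..<p} \<times> {..<p}) \<subseteq> carrier G" using A B by auto
  have "card ((\<lambda>(i, j). A [^] i \<otimes> B [^] j) ` ({..<p} \<times> {..<p})) = p ^ 2"
    using card_image[OF inj] by (simp add: power2_eq_square)
  then have "(\<lambda>(i, j). A [^] i \<otimes> B [^] j) ` ({..<p} \<times> {..<p}) = carrier G"
    using card img fin by (metis card_subset_eq)
  then show ?thesis using A(1) B(1) inj unfolding bij_betw_def by blast
qed

end

lemma (in group) pow_mod_exp: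
  assumes V: "V \<in> carrier G" and e: "V [^] (p::nat) = \<one>"
  shows "V [^] (n::nat) = V [^] (n mod p)"
proof -
  have "V [^] n = V [^] (p * (n div p) + n mod p)" by simp
  also have "\<dots> = (V [^] p) [^] (n div p) \<otimes> V [^] (n mod p)" using V by (simp add: nat_pow_mult nat_pow_pow)
  also have "\<dots> = V [^] (n mod p)" using e V by simp
  finally show ?thesis .
qed

context mainctx begin

lemma exists_w: "\<exists>w. w \<in> uc G 1 \<and> w \<noteq> \<one> \<and> w [^] p = \<one>"
proof -
  have "(2::nat) ^ 2 \<le> p ^ 2" using p_ge2 by (rule power_mono) simp
  then have c1: "card (uc G 1) > 1" using counts(1) by simp
  have "\<not> uc G 1 \<subseteq> {\<one>}"
  proof
    assume "uc G 1 \<subseteq> {\<one>}"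
    then have "card (uc G 1) \<le> card {\<one>}" by (rule card_mono[rotated]) simp
    then show False using c1 by simp
  qed
  then obtain z where z: "z \<in> uc G 1" "z \<noteq> \<one>" by blast
  have zc: "z \<in> carrier G" using z uc_carrier by blast
  have "ord z dvd p ^ n" using ord_dvd_group_order[OF zc] cardG unfolding order_def by simp
  then obtain k where k: "ord z = p ^ k" using divides_primepow_nat[OF prime_p] by auto
  have "k \<noteq> 0" using k ord_eq_1[OF zc] z(2) by auto
  then obtain k' where k': "k = Suc k'" by (cases k) auto
  define w where "w = z [^] (p ^ k')"
  have "w [^] p = z [^] (p ^ k)" unfolding w_def using zc k' by (simp add: nat_pow_pow mult.commute)
  also have "\<dots> = \<one>" using k zc by (metis pow_ord_eq_1)
  finally have wp: "w [^] p = \<one>" .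
  have "w \<noteq> \<one>"
  proof
    assume "w = \<one>"
    then have "p ^ k dvd p ^ k'" using pow_eq_id[OF zc] k unfolding w_def by simp
    moreover have "p ^ k' < p ^ k" using k' p_ge2 by simp
    moreover have "0 < p ^ k'" using p_ge2 by simp
    ultimately show False by (meson dvd_imp_le not_less)
  qed
  moreover have "w \<in> uc G 1" unfolding w_def
    using pow_in_gen[OF zc] generate_subgroup_incl[OF _ uc_subgroup, of "{z}" 1] z by auto
  ultimately show ?thesis using wp by blast
qed

end

lemma (in comm_group) swap_mid:
  "\<lbrakk>a \<in> carrier G; b \<in> carrier G; c \<in> carrier G; d \<in> carrier G\<rbrakk> \<Longrightarrow> (a \<otimes> b) \<otimes> (c \<otimes> d) = (a \<otimes> c) \<otimes> (b \<otimes> d)"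
  by (simp add: m_ac)

context mainctx begin

lemma aut_lower:
  assumes finA: "finite (central_aut_Z G)"
  shows "p ^ 2 \<le> card (central_aut_Z G)"
proof -
  interpret N: normal NN G by (rule NN_normal)
  interpret Q: comm_group QQ by (rule QQ_comm)
  define P where "P = {..<p} \<times> {..<p}"
  obtain A B where AB: "A \<in> carrier QQ" "B \<in> carrier QQ"
    and bij0: "bij_betw (\<lambda>(i, j). A [^]\<^bsub>QQ\<^esub> i \<otimes>\<^bsub>QQ\<^esub> B [^]\<^bsub>QQ\<^esub> j) P (carrier QQ)"
    using Q.basis[OF prime_p QQ_fin QQ_card QQ_exp] unfolding P_def by blast
  define f where "f = (\<lambda>(i, j). A [^]\<^bsub>QQ\<^esub> (i::nat) \<otimes>\<^bsub>QQ\<^esub> B [^]\<^bsub>QQ\<^esub> (j::nat))"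
  have bij: "bij_betw f P (carrier QQ)" using bij0 unfolding f_def .
  have injf: "inj_on f P" and imf: "f ` P = carrier QQ" using bij unfolding bij_betw_def by auto
  define dec where "dec = the_inv_into P f"
  have decP: "dec V \<in> P" and fdec: "f (dec V) = V" if "V \<in> carrier QQ" for V
    unfolding dec_def using that imf the_inv_into_into[OF injf, of V P] f_the_inv_into_f[OF injf, of V] by auto
  have decf: "dec (f ij) = ij" if "ij \<in> P" for ij
    unfolding dec_def using the_inv_into_f_f[OF injf that] .
  obtain w where w: "w \<in> uc G 1" "w \<noteq> \<one>" "w [^] p = \<one>" using exists_w by blast
  have wc: "w \<in> carrier G" using w uc_carrier by blast
  have wpow: "w [^] a = w [^] b" if "a mod p = b mod p" for a b :: nat
    using pow_mod_exp[OF wc w(3), of a] pow_mod_exp[OF wc w(3), of b] that by simp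
  have Apow: "A [^]\<^bsub>QQ\<^esub> a = A [^]\<^bsub>QQ\<^esub> (a mod p)" for a :: nat
    by (rule Q.pow_mod_exp[OF AB(1) QQ_exp[OF AB(1)]])
  have Bpow: "B [^]\<^bsub>QQ\<^esub> a = B [^]\<^bsub>QQ\<^esub> (a mod p)" for a :: nat
    by (rule Q.pow_mod_exp[OF AB(2) QQ_exp[OF AB(2)]])
  have p0: "0 < p" using p_ge2 by simp
  have dec_mult: "dec (V \<otimes>\<^bsub>QQ\<^esub> W) = ((fst (dec V) + fst (dec W)) mod p, (snd (dec V) + snd (dec W)) mod p)"
    if V: "V \<in> carrier QQ" and W: "W \<in> carrier QQ" for V W
  proof -
    obtain i j where ij: "dec V = (i, j)" by (cases "dec V")
    obtain k l where kl: "dec W = (k, l)" by (cases "dec W")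
    have Ve: "V = A [^]\<^bsub>QQ\<^esub> i \<otimes>\<^bsub>QQ\<^esub> B [^]\<^bsub>QQ\<^esub> j" using fdec[OF V] ij unfolding f_def by simp
    have We: "W = A [^]\<^bsub>QQ\<^esub> k \<otimes>\<^bsub>QQ\<^esub> B [^]\<^bsub>QQ\<^esub> l" using fdec[OF W] kl unfolding f_def by simp
    have "V \<otimes>\<^bsub>QQ\<^esub> W = (A [^]\<^bsub>QQ\<^esub> i \<otimes>\<^bsub>QQ\<^esub> A [^]\<^bsub>QQ\<^esub> k) \<otimes>\<^bsub>QQ\<^esub> (B [^]\<^bsub>QQ\<^esub> j \<otimes>\<^bsub>QQ\<^esub> B [^]\<^bsub>QQ\<^esub> l)"
      unfolding Ve We by (intro Q.swap_mid Q.nat_pow_closed AB)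
    also have "\<dots> = A [^]\<^bsub>QQ\<^esub> (i + k) \<otimes>\<^bsub>QQ\<^esub> B [^]\<^bsub>QQ\<^esub> (j + l)" by (simp only: Q.nat_pow_mult AB)
    also have "\<dots> = f ((i + k) mod p, (j + l) mod p)" unfolding f_def using Apow Bpow by simp
    finally have "dec (V \<otimes>\<^bsub>QQ\<^esub> W) = ((i + k) mod p, (j + l) mod p)"
      using decf[of "((i + k) mod p, (j + l) mod p)"] p0 unfolding P_def by simp
    then show ?thesis using ij kl by simp
  qed
  define \<mu> where "\<mu> = (\<lambda>(s::nat) (t::nat) x. w [^] (s * fst (dec (NN #> x)) + t * snd (dec (NN #> x))))"
  define \<alpha> where "\<alpha> = (\<lambda>s t. \<lambda>x\<in>carrier G. x \<otimes> \<mu> s t x)"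
  have cosQ: "NN #> x \<in> carrier QQ" if "x \<in> carrier G" for x
    using that unfolding carrier_FactGroup by auto
  have \<mu>_Z: "\<mu> s t x \<in> uc G 1" for s t x
  proof -
    have "generate G {w} \<subseteq> uc G 1" using w(1) by (intro generate_subgroup_incl[OF _ uc_subgroup]) auto
    then show ?thesis unfolding \<mu>_def using pow_in_gen[OF wc] by blast
  qed
  have \<mu>_c: "\<mu> s t x \<in> carrier G" for s t x using \<mu>_Z uc_carrier by blast
  have \<mu>_comm: "\<mu> s t x \<otimes> y = y \<otimes> \<mu> s t x" if "y \<in> carrier G" for s t x y
    using \<mu>_Z[of s t x] that unfolding uc_one center_def by auto
  have modeq: "(s * ((i + k) mod p) + t * ((j + l) mod p)) mod p = ((s * i + t * j) + (s * k + t * l)) mod p"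
    for s t i j k l :: nat
  proof -
    have "(s * ((i + k) mod p) + t * ((j + l) mod p)) mod p = (s * (i + k) + t * (j + l)) mod p"
      by (rule mod_add_cong) (rule mod_mult_right_eq)+
    also have "s * (i + k) + t * (j + l) = (s * i + t * j) + (s * k + t * l)" by (simp add: algebra_simps)
    finally show ?thesis .
  qed
  have \<mu>_mult: "\<mu> s t (x \<otimes> y) = \<mu> s t x \<otimes> \<mu> s t y" if x: "x \<in> carrier G" and y: "y \<in> carrier G" for s t x y
  proof -
    have "NN #> (x \<otimes> y) = (NN #> x) \<otimes>\<^bsub>QQ\<^esub> (NN #> y)" using N.rcos_sum x y by simp
    then have d: "dec (NN #> (x \<otimes> y)) = ((fst (dec (NN #> x)) + fst (dec (NN #> y))) mod p, (snd (dec (NN #> x)) + snd (dec (NN #> y))) mod p)"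
      using dec_mult[OF cosQ[OF x] cosQ[OF y]] by simp
    define i where "i = fst (dec (NN #> x))"
    define j where "j = snd (dec (NN #> x))"
    define k where "k = fst (dec (NN #> y))"
    define l where "l = snd (dec (NN #> y))"
    have "\<mu> s t (x \<otimes> y) = w [^] (s * ((i + k) mod p) + t * ((j + l) mod p))"
      unfolding \<mu>_def d i_def j_def k_def l_def by (simp only: fst_conv snd_conv)
    also have "\<dots> = w [^] ((s * i + t * j) + (s * k + t * l))" by (rule wpow[OF modeq])
    also have "\<dots> = w [^] (s * i + t * j) \<otimes> w [^] (s * k + t * l)" using wc by (simp add: nat_pow_mult)
    also have "\<dots> = \<mu> s t x \<otimes> \<mu> s t y" unfolding \<mu>_def i_def j_def k_def l_def by simp
    finally show ?thesis .
  qed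
  have \<mu>_one: "\<mu> s t z = \<one>" if z: "z \<in> NN" for s t z
  proof -
    have zc: "z \<in> carrier G" using z uc_carrier by blast
    have "NN #> z = NN" using coset_join2[OF zc N.subgroup_axioms z] .
    also have "NN = f (0, 0)"
    proof -
      have "f (0, 0) = \<one>\<^bsub>QQ\<^esub>" unfolding f_def using Q.one_closed by (simp only: prod.case Q.nat_pow_0 Q.l_one)
      then show ?thesis by (simp only: one_FactGroup)
    qed
    finally have "dec (NN #> z) = (0, 0)" using decf[of "(0, 0)"] p0 unfolding P_def by simp
    then show ?thesis unfolding \<mu>_def by simp
  qed
  have \<alpha>_coset: "NN #> (x \<otimes> \<mu> s t x) = NN #> x" if x: "x \<in> carrier G" for s t x
  proof -
    have "(x \<otimes> \<mu> s t x) \<otimes> inv x = \<mu> s t x" using x \<mu>_c \<mu>_comm by (simp add: m_assoc)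
    then have "(x \<otimes> \<mu> s t x) \<otimes> inv x \<in> NN" using \<mu>_Z Z_NN by auto
    then show ?thesis using coset_eq_iff[OF NN_normal] x \<mu>_c by simp
  qed
  have \<alpha>_in: "\<alpha> s t \<in> central_aut_Z G" for s t
  proof -
    have hom: "\<alpha> s t \<in> hom G G"
    proof (rule homI)
      fix x assume "x \<in> carrier G" then show "\<alpha> s t x \<in> carrier G" unfolding \<alpha>_def using \<mu>_c by simp
    next
      fix x y assume x: "x \<in> carrier G" and y: "y \<in> carrier G"
      have "x \<otimes> y \<otimes> (\<mu> s t x \<otimes> \<mu> s t y) = x \<otimes> ((y \<otimes> \<mu> s t x) \<otimes> \<mu> s t y)"
        using x y \<mu>_c by (simp add: m_assoc)
      also have "\<dots> = x \<otimes> ((\<mu> s t x \<otimes> y) \<otimes> \<mu> s t y)" using \<mu>_comm[OF y, of s t x] by simp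
      finally have e: "x \<otimes> y \<otimes> (\<mu> s t x \<otimes> \<mu> s t y) = x \<otimes> \<mu> s t x \<otimes> (y \<otimes> \<mu> s t y)"
        using x y \<mu>_c by (simp add: m_assoc)
      show "\<alpha> s t (x \<otimes> y) = \<alpha> s t x \<otimes> \<alpha> s t y"
        unfolding \<alpha>_def using x y e \<mu>_mult[OF x y] by simp
    qed
    have inj: "inj_on (\<alpha> s t) (carrier G)"
    proof (rule inj_onI)
      fix x y assume x: "x \<in> carrier G" and y: "y \<in> carrier G" and e: "\<alpha> s t x = \<alpha> s t y"
      then have e': "x \<otimes> \<mu> s t x = y \<otimes> \<mu> s t y" unfolding \<alpha>_def by simp
      then have "NN #> x = NN #> y" using \<alpha>_coset[OF x, of s t] \<alpha>_coset[OF y, of s t] by simp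
      then have "\<mu> s t x = \<mu> s t y" unfolding \<mu>_def by simp
      then show "x = y" using e' x y \<mu>_c by simp
    qed
    have im: "\<alpha> s t ` carrier G \<subseteq> carrier G" unfolding \<alpha>_def using \<mu>_c by auto
    have "\<alpha> s t ` carrier G = carrier G" by (rule endo_inj_surj[OF fin im inj])
    then have "\<alpha> s t \<in> Bij (carrier G)" unfolding Bij_def bij_betw_def \<alpha>_def using inj unfolding \<alpha>_def by simp
    then have aut: "\<alpha> s t \<in> auto G" unfolding auto_def using hom by simp
    have cen: "inv x \<otimes> \<alpha> s t x \<in> center G" if x: "x \<in> carrier G" for x
      using \<mu>_Z[of s t x] x \<mu>_c unfolding \<alpha>_def uc_one by simp
    have fx: "\<alpha> s t z = z" if z: "z \<in> center G" for z
    proof -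
      have "z \<in> NN" using z Z_NN uc_one by auto
      then show ?thesis unfolding \<alpha>_def using \<mu>_one z unfolding center_def by simp
    qed
    show ?thesis unfolding central_aut_Z_def central_aut_def using aut cen fx by simp
  qed
  obtain a0 where a0: "a0 \<in> carrier G" "A = NN #> a0" using AB(1) unfolding carrier_FactGroup by auto
  obtain b0 where b0: "b0 \<in> carrier G" "B = NN #> b0" using AB(2) unfolding carrier_FactGroup by auto
  have p1: "1 < p" using p_ge2 by simp
  have "f (1, 0) = A" unfolding f_def using AB Q.one_closed by (simp only: prod.case Q.nat_pow_0 Q.nat_pow_eone Q.r_one Q.l_one)
  then have decA: "dec A = (1, 0)" using decf[of "(1, 0)"] p1 p0 unfolding P_def by simp
  have "f (0, 1) = B" unfolding f_def using AB Q.one_closed by (simp only: prod.case Q.nat_pow_0 Q.nat_pow_eone Q.r_one Q.l_one)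
  then have decB: "dec B = (0, 1)" using decf[of "(0, 1)"] p1 p0 unfolding P_def by simp
  have \<mu>a: "\<mu> s t a0 = w [^] s" for s t unfolding \<mu>_def using decA a0 by simp
  have \<mu>b: "\<mu> s t b0 = w [^] t" for s t unfolding \<mu>_def using decB b0 by simp
  have ow: "ord w = p" using ord_p[OF prime_p wc w(2) w(3)] .
  have winj: "s = s'" if "w [^] s = w [^] s'" "s < p" "s' < p" for s s' :: nat
  proof -
    have "s \<in> {0 .. ord w - 1}" "s' \<in> {0 .. ord w - 1}" using that ow by auto
    then show ?thesis using ord_inj[OF wc] that(1) by (meson inj_onD)
  qed
  have inj\<alpha>: "inj_on (\<lambda>(s, t). \<alpha> s t) P"
  proof (rule inj_onI, clarsimp simp: P_def)
    fix s t s' t' :: nat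
    assume lt: "s < p" "t < p" "s' < p" "t' < p" and e: "\<alpha> s t = \<alpha> s' t'"
    have "a0 \<otimes> w [^] s = a0 \<otimes> w [^] s'" using fun_cong[OF e, of a0] a0 \<mu>a unfolding \<alpha>_def by simp
    then have "s = s'" using winj lt a0 wc by simp
    moreover have "b0 \<otimes> w [^] t = b0 \<otimes> w [^] t'" using fun_cong[OF e, of b0] b0 \<mu>b unfolding \<alpha>_def by simp
    then have "t = t'" using winj lt b0 wc by simp
    ultimately show "s = s' \<and> t = t'" by simp
  qed
  have "(\<lambda>(s, t). \<alpha> s t) ` P \<subseteq> central_aut_Z G" using \<alpha>_in by auto
  then have "card ((\<lambda>(s, t). \<alpha> s t) ` P) \<le> card (central_aut_Z G)" by (rule card_mono[OF finA])
  moreover have "card ((\<lambda>(s, t). \<alpha> s t) ` P) = p ^ 2"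
    using card_image[OF inj\<alpha>] unfolding P_def by (simp add: power2_eq_square)
  ultimately show ?thesis by simp
qed

end

theorem lemma2p2:
  fixes G :: "('a, 'b) monoid_scheme" and p n :: nat
  assumes "Factorial_Ring.prime p"
    and "group G"
    and "finite (carrier G)"
    and "order G = p ^ n"
    and "\<not> center G \<subseteq> commutator_subgroup G"
    and "nilpotency_class G \<ge> 3"
    and "n = nilpotency_class G + 2"
  shows "\<not> (central_aut_Z G = center (InnGroup G) \<and> central_aut_Z G \<subset> central_aut G)"
proof
  assume h: "central_aut_Z G = center (InnGroup G) \<and> central_aut_Z G \<subset> central_aut G"
  interpret M: mainctx G p n
  proof -
    interpret group G by (rule assms(2))
    show "mainctx G p n"
      by unfold_locales (use assms in \<open>auto simp: order_def\<close>)
  qed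
  have fA: "finite (central_aut_Z G)" using h M.center_Inn_small(2) by simp
  have "p ^ 2 \<le> card (central_aut_Z G)" by (rule M.aut_lower[OF fA])
  also have "\<dots> \<le> p" using h M.center_Inn_small(1) by simp
  finally have "p * p \<le> p * 1" by (simp add: power2_eq_square)
  then show False using M.p_ge2 by simp
qed

end
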